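(* Let $L:\mathbb{R}^n\times\mathbb{R}^n\to\mathbb{R}$ be smooth and $\tau>0$. Consider the midpoint scheme (Lagrangian form) $$\frac{p_{k+1}-p_k}{\tau}=D_1L\Big(\frac{q_{k+1}+q_k}{2},\frac{q_{k+1}-q_k}{\tau}\Big),\qquad \frac{p_{k+1}+p_k}{2}=D_2L\Big(\frac{q_{k+1}+q_k}{2},\frac{q_{k+1}-q_k}{\tau}\Big).$$ Let $W\subset\mathbb{R}^{2n}$ be open and $F:W\to\mathbb{R}^{2n}$ smooth such that for every $(q_k,p_k)\in W$, $(q_{k+1},p_{k+1})=F(q_k,p_k)$ satisfies these equations. Then $F$ is symplectic: $F^*\big(\sum_i dp_i\wedge dq^i\big)=\sum_i dp_i\wedge dq^i$.
   Context: $D_1L$, $D_2L$ denote the partial derivatives of $L(q,v)$ with respect to $q$ and $v$. *)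

theory Defs
  imports "HOL-Analysis.Analysis"
begin

fun k_smooth_on :: "nat \<Rightarrow> 'a::real_normed_vector set \<Rightarrow> ('a \<Rightarrow> 'b::real_normed_vector) \<Rightarrow> bool" where
  "k_smooth_on 0 S f = continuous_on S f"
| "k_smooth_on (Suc k) S f =
     (f differentiable_on S \<and> (\<forall>v. k_smooth_on k S (\<lambda>x. frechet_derivative f (at x) v)))"

definition smooth_on :: "'a::real_normed_vector set \<Rightarrow> ('a \<Rightarrow> 'b::real_normed_vector) \<Rightarrow> bool" where
  "smooth_on S f \<longleftrightarrow> (\<forall>k. k_smooth_on k S f)"

definition D1 :: "((real^'n) \<times> (real^'n) \<Rightarrow> real) \<Rightarrow> real^'n \<Rightarrow> real^'n \<Rightarrow> real^'n" where
  "D1 L q v = (\<chi> i. frechet_derivative (\<lambda>x. L (x, v)) (at q) (axis i 1))"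

definition D2 :: "((real^'n) \<times> (real^'n) \<Rightarrow> real) \<Rightarrow> real^'n \<Rightarrow> real^'n \<Rightarrow> real^'n" where
  "D2 L q v = (\<chi> i. frechet_derivative (\<lambda>x. L (q, x)) (at v) (axis i 1))"

text \<open>The canonical 2-form sum_i dp_i wedge dq^i on R^n x R^n (points written (q,p)).\<close>
definition omega :: "(real^'n) \<times> (real^'n) \<Rightarrow> (real^'n) \<times> (real^'n) \<Rightarrow> real" where
  "omega u w = (\<Sum>i\<in>UNIV. snd u $ i * fst w $ i - snd w $ i * fst u $ i)"

definition symplectic_on :: "((real^'n) \<times> (real^'n)) set \<Rightarrow> ((real^'n) \<times> (real^'n) \<Rightarrow> (real^'n) \<times> (real^'n)) \<Rightarrow> bool" where
  "symplectic_on W F \<longleftrightarrow> (\<forall>x\<in>W. \<forall>u w.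
      omega (frechet_derivative F (at x) u) (frechet_derivative F (at x) w) = omega u w)"

end

theory Submission
  imports Defs
begin

lemma deriv_line:
  fixes f :: "'a::real_normed_vector \<Rightarrow> real"
  assumes "f differentiable at (a + t *\<^sub>R v)"
  shows "((\<lambda>t. f (a + t *\<^sub>R v)) has_real_derivative frechet_derivative f (at (a + t *\<^sub>R v)) v) (at t)"
proof -
  let ?D = "frechet_derivative f (at (a + t *\<^sub>R v))"
  have fd: "(f has_derivative ?D) (at (a + t *\<^sub>R v))"
    using assms frechet_derivative_works by blast
  have ld: "((\<lambda>t. a + t *\<^sub>R v) has_derivative (\<lambda>x. x *\<^sub>R v)) (at t)"
    by (auto intro!: derivative_eq_intros)
  have "((\<lambda>t. f (a + t *\<^sub>R v)) has_derivative (\<lambda>x. ?D (x *\<^sub>R v))) (at t)"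
    using has_derivative_compose[OF ld fd] by (simp add: o_def)
  moreover have "(\<lambda>x. ?D (x *\<^sub>R v)) = (\<lambda>x. ?D v * x)"
    using linear_frechet_derivative[OF assms] by (auto simp: linear_scale)
  ultimately show ?thesis by (simp add: has_field_derivative_def)
qed

lemma mvt2d:
  fixes f :: "'a::real_normed_vector \<Rightarrow> real"
  assumes df: "\<And>y. f differentiable at y"
  and dg: "\<And>y. (\<lambda>y. frechet_derivative f (at y) g) differentiable at y"
  and s: "s > 0"
  shows "\<exists>t u. 0 < t \<and> t < s \<and> 0 < u \<and> u < s \<and>
     f (z + s *\<^sub>R g + s *\<^sub>R h) - f (z + s *\<^sub>R g) - f (z + s *\<^sub>R h) + f z
       = s * s * frechet_derivative (\<lambda>y. frechet_derivative f (at y) g) (at (z + t *\<^sub>R g + u *\<^sub>R h)) h"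
proof -
  define Dg where "Dg = (\<lambda>y. frechet_derivative f (at y) g)"
  define k where "k = (\<lambda>t. f ((z + s *\<^sub>R h) + t *\<^sub>R g) - f (z + t *\<^sub>R g))"
  have "\<And>t. 0 \<le> t \<Longrightarrow> t \<le> s \<Longrightarrow> (k has_real_derivative (Dg ((z + s *\<^sub>R h) + t *\<^sub>R g) - Dg (z + t *\<^sub>R g))) (at t)"
    unfolding k_def Dg_def by (intro derivative_intros deriv_line df)
  from MVT2[OF s this] obtain t where t: "0 < t" "t < s"
    and kt: "k s - k 0 = (s - 0) * (Dg ((z + s *\<^sub>R h) + t *\<^sub>R g) - Dg (z + t *\<^sub>R g))" by auto
  define m where "m = (\<lambda>u. Dg ((z + t *\<^sub>R g) + u *\<^sub>R h))"
  have "\<And>u. 0 \<le> u \<Longrightarrow> u \<le> s \<Longrightarrow> (m has_real_derivative frechet_derivative Dg (at ((z + t *\<^sub>R g) + u *\<^sub>R h)) h) (at u)"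
    unfolding m_def by (intro deriv_line) (simp add: Dg_def dg)
  from MVT2[OF s this] obtain u where u: "0 < u" "u < s"
    and mu: "m s - m 0 = (s - 0) * frechet_derivative Dg (at ((z + t *\<^sub>R g) + u *\<^sub>R h)) h" by auto
  have "f (z + s *\<^sub>R g + s *\<^sub>R h) - f (z + s *\<^sub>R g) - f (z + s *\<^sub>R h) + f z = k s - k 0"
    unfolding k_def by (simp add: algebra_simps)
  also have "\<dots> = s * (m s - m 0)" using kt unfolding m_def by (simp add: algebra_simps)
  also have "\<dots> = s * s * frechet_derivative Dg (at (z + t *\<^sub>R g + u *\<^sub>R h)) h" using mu by simp
  finally show ?thesis using t u unfolding Dg_def by blast
qed

lemma schwarz:
  fixes f :: "'a::real_normed_vector \<Rightarrow> real"
  assumes df: "\<And>y. f differentiable at y"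
  and dg: "\<And>y. (\<lambda>y. frechet_derivative f (at y) g) differentiable at y"
  and dh: "\<And>y. (\<lambda>y. frechet_derivative f (at y) h) differentiable at y"
  and cg: "continuous_on UNIV (\<lambda>y. frechet_derivative (\<lambda>y. frechet_derivative f (at y) g) (at y) h)"
  and ch: "continuous_on UNIV (\<lambda>y. frechet_derivative (\<lambda>y. frechet_derivative f (at y) h) (at y) g)"
  shows "frechet_derivative (\<lambda>y. frechet_derivative f (at y) g) (at z) h
       = frechet_derivative (\<lambda>y. frechet_derivative f (at y) h) (at z) g"
proof (rule ccontr)
  define A where "A = (\<lambda>y. frechet_derivative (\<lambda>y. frechet_derivative f (at y) g) (at y) h)"
  define B where "B = (\<lambda>y. frechet_derivative (\<lambda>y. frechet_derivative f (at y) h) (at y) g)"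
  assume "\<not> ?thesis"
  hence ne: "A z \<noteq> B z" unfolding A_def B_def .
  define e where "e = \<bar>A z - B z\<bar> / 2"
  have e: "e > 0" using ne unfolding e_def by auto
  have "isCont A z" using cg unfolding A_def by (simp add: continuous_on_eq_continuous_at)
  then obtain d1 where d1: "d1 > 0" "\<And>y. dist y z < d1 \<Longrightarrow> dist (A y) (A z) < e"
    using e unfolding continuous_at_eps_delta by blast
  have "isCont B z" using ch unfolding B_def by (simp add: continuous_on_eq_continuous_at)
  then obtain d2 where d2: "d2 > 0" "\<And>y. dist y z < d2 \<Longrightarrow> dist (B y) (B z) < e"
    using e unfolding continuous_at_eps_delta by blast
  define d where "d = min d1 d2"
  have d: "d > 0" using d1 d2 unfolding d_def by auto
  define s where "s = d / (norm g + norm h + 1)"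
  have pos: "norm g + norm h + 1 > 0" by (smt (verit) norm_ge_zero)
  have s: "s > 0" using d pos unfolding s_def by simp
  have sd: "s * (norm g + norm h) < d"
  proof -
    have "s * (norm g + norm h) < s * (norm g + norm h + 1)" using s by simp
    also have "\<dots> = d" unfolding s_def using pos by simp
    finally show ?thesis .
  qed
  have close: "dist (z + t *\<^sub>R v + u *\<^sub>R w) z < d"
    if "0 < t" "t < s" "0 < u" "u < s" "norm v + norm w = norm g + norm h" for t u v w
  proof -
    have "dist (z + t *\<^sub>R v + u *\<^sub>R w) z = norm (t *\<^sub>R v + u *\<^sub>R w)" by (simp add: dist_norm)
    also have "\<dots> \<le> t * norm v + u * norm w"
      using that by (metis abs_of_pos norm_scaleR norm_triangle_ineq)
    also have "\<dots> \<le> s * norm v + s * norm w"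
      using that by (intro add_mono mult_right_mono) auto
    also have "\<dots> = s * (norm v + norm w)" by (simp add: algebra_simps)
    also have "\<dots> < d" using sd that by simp
    finally show ?thesis .
  qed
  obtain t1 u1 where tu1: "0 < t1" "t1 < s" "0 < u1" "u1 < s"
    and E1: "f (z + s *\<^sub>R g + s *\<^sub>R h) - f (z + s *\<^sub>R g) - f (z + s *\<^sub>R h) + f z = s * s * A (z + t1 *\<^sub>R g + u1 *\<^sub>R h)"
    using mvt2d[OF df dg s, of z h] unfolding A_def by blast
  obtain t2 u2 where tu2: "0 < t2" "t2 < s" "0 < u2" "u2 < s"
    and E2: "f (z + s *\<^sub>R h + s *\<^sub>R g) - f (z + s *\<^sub>R h) - f (z + s *\<^sub>R g) + f z = s * s * B (z + t2 *\<^sub>R h + u2 *\<^sub>R g)"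
    using mvt2d[OF df dh s, of z g] unfolding B_def by blast
  have "s * s * A (z + t1 *\<^sub>R g + u1 *\<^sub>R h) = s * s * B (z + t2 *\<^sub>R h + u2 *\<^sub>R g)"
    using E1 E2 by (simp add: algebra_simps)
  hence AB: "A (z + t1 *\<^sub>R g + u1 *\<^sub>R h) = B (z + t2 *\<^sub>R h + u2 *\<^sub>R g)" using s by simp
  have "dist (A (z + t1 *\<^sub>R g + u1 *\<^sub>R h)) (A z) < e"
    using d1(2) close[OF tu1] unfolding d_def by auto
  moreover have "dist (B (z + t2 *\<^sub>R h + u2 *\<^sub>R g)) (B z) < e"
    using d2(2) close[OF tu2] unfolding d_def by auto
  ultimately have "\<bar>A z - B z\<bar> < 2 * e" using AB by (simp add: dist_real_def)
  thus False unfolding e_def by simp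
qed

lemma D1_eq:
  assumes "L differentiable at (q, v)"
  shows "D1 L q v = (\<chi> i. frechet_derivative L (at (q, v)) (axis i 1, 0))"
proof -
  have fd: "(L has_derivative frechet_derivative L (at (q, v))) (at (q, v))"
    using assms frechet_derivative_works by blast
  have pd: "((\<lambda>x. (x, v)) has_derivative (\<lambda>d. (d, 0))) (at q)"
    by (auto intro!: derivative_eq_intros)
  have "((\<lambda>x. L (x, v)) has_derivative (\<lambda>d. frechet_derivative L (at (q, v)) (d, 0))) (at q)"
    using has_derivative_compose[OF pd fd] by (simp add: o_def)
  hence "frechet_derivative (\<lambda>x. L (x, v)) (at q) = (\<lambda>d. frechet_derivative L (at (q, v)) (d, 0))"
    using frechet_derivative_at by metis
  thus ?thesis unfolding D1_def by simp
qed

lemma D2_eq: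
  assumes "L differentiable at (q, v)"
  shows "D2 L q v = (\<chi> i. frechet_derivative L (at (q, v)) (0, axis i 1))"
proof -
  have fd: "(L has_derivative frechet_derivative L (at (q, v))) (at (q, v))"
    using assms frechet_derivative_works by blast
  have pd: "((\<lambda>x. (q, x)) has_derivative (\<lambda>d. (0, d))) (at v)"
    by (auto intro!: derivative_eq_intros)
  have "((\<lambda>x. L (q, x)) has_derivative (\<lambda>d. frechet_derivative L (at (q, v)) (0, d))) (at v)"
    using has_derivative_compose[OF pd fd] by (simp add: o_def)
  hence "frechet_derivative (\<lambda>x. L (q, x)) (at v) = (\<lambda>d. frechet_derivative L (at (q, v)) (0, d))"
    using frechet_derivative_at by metis
  thus ?thesis unfolding D2_def by simp
qed

theorem mainTheorem3:
  fixes L :: "(real^'n) \<times> (real^'n) \<Rightarrow> real"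
    and \<tau> :: real
    and W :: "((real^'n) \<times> (real^'n)) set"
    and F :: "(real^'n) \<times> (real^'n) \<Rightarrow> (real^'n) \<times> (real^'n)"
  assumes L_smooth: "smooth_on UNIV L"
    and tau_pos: "\<tau> > 0"
    and W_open: "open W"
    and F_smooth: "smooth_on W F"
    and scheme: "\<And>q p q' p'. (q, p) \<in> W \<Longrightarrow> F (q, p) = (q', p') \<Longrightarrow>
        (1 / \<tau>) *\<^sub>R (p' - p) = D1 L ((1/2) *\<^sub>R (q' + q)) ((1 / \<tau>) *\<^sub>R (q' - q)) \<and>
        (1/2) *\<^sub>R (p' + p) = D2 L ((1/2) *\<^sub>R (q' + q)) ((1 / \<tau>) *\<^sub>R (q' - q))"
  shows "symplectic_on W F"
proof -
  define L' where "L' = (\<lambda>z. frechet_derivative L (at z))"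
  define M where "M = (\<lambda>z g e. frechet_derivative (\<lambda>y. L' y e) (at z) g)"
  have k2: "k_smooth_on 2 UNIV L" using L_smooth unfolding smooth_on_def by blast
  hence Ld: "\<And>z. L differentiable at z"
    and Ld1: "\<And>v z. (\<lambda>z. L' z v) differentiable at z"
    and Lc2: "\<And>v w. continuous_on UNIV (\<lambda>x. frechet_derivative (\<lambda>z. L' z v) (at x) w)"
    by (auto simp: numeral_2_eq_2 differentiable_on_def L'_def)
  have Msym: "M z g e = M z e g" for z g e
    unfolding M_def L'_def
    by (rule schwarz[of L e g z]) (use Ld Ld1 Lc2 in \<open>auto simp: L'_def\<close>)
  have Mlin1: "linear (\<lambda>g. M z g e)" for z e
    unfolding M_def by (rule linear_frechet_derivative[OF Ld1])
  have Mlin: "linear (M z g)" for z g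
  proof -
    have "M z g = (\<lambda>e. M z e g)" using Msym by (intro ext) blast
    thus ?thesis using Mlin1 by simp
  qed
  have Md: "((\<lambda>y. L' y e) has_derivative (\<lambda>g. M z g e)) (at z)" for z e
    unfolding M_def using Ld1 frechet_derivative_works by blast
  show ?thesis unfolding symplectic_on_def
  proof (intro ballI allI)
    fix x u w assume xW: "x \<in> W"
    have "k_smooth_on 1 W F" using F_smooth unfolding smooth_on_def by blast
    hence "F differentiable_on W" by simp
    hence "F differentiable at x" using W_open xW differentiable_on_eq_differentiable_at by blast
    then have FD: "(F has_derivative frechet_derivative F (at x)) (at x)"
      using frechet_derivative_works by blast
    define F' where "F' = frechet_derivative F (at x)"
    have FD: "(F has_derivative F') (at x)" using FD unfolding F'_def .
    define G where "G = (\<lambda>y. ((1/2) *\<^sub>R (fst (F y) + fst y), (1/\<tau>) *\<^sub>R (fst (F y) - fst y)))"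
    define G' where "G' = (\<lambda>d. ((1/2) *\<^sub>R (fst (F' d) + fst d), (1/\<tau>) *\<^sub>R (fst (F' d) - fst d)))"
    have GD: "(G has_derivative G') (at x)"
      unfolding G_def G'_def
      by (intro derivative_intros FD)
    define z where "z = G x"
    have Sch: "(1/\<tau>) * (snd (F y) $ i - snd y $ i) = L' (G y) (axis i 1, 0) \<and>
               (1/2) * (snd (F y) $ i + snd y $ i) = L' (G y) (0, axis i 1)" if "y \<in> W" for y i
    proof -
      obtain q p where y: "y = (q, p)" by fastforce
      obtain q' p' where Fy: "F y = (q', p')" by fastforce
      have "(1 / \<tau>) *\<^sub>R (p' - p) = D1 L ((1/2) *\<^sub>R (q' + q)) ((1 / \<tau>) *\<^sub>R (q' - q)) \<and>
        (1/2) *\<^sub>R (p' + p) = D2 L ((1/2) *\<^sub>R (q' + q)) ((1 / \<tau>) *\<^sub>R (q' - q))"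
        using scheme that y Fy by blast
      moreover have "G y = ((1/2) *\<^sub>R (q' + q), (1 / \<tau>) *\<^sub>R (q' - q))"
        unfolding G_def using Fy y by simp
      ultimately show ?thesis
        unfolding y Fy using D1_eq[OF Ld] D2_eq[OF Ld]
        using Fy[unfolded y] by (simp add: L'_def vec_eq_iff)
    qed
    have nth: "bounded_linear (\<lambda>v::real^'n. v $ i)" for i by (rule bounded_linear_vec_nth)
    have E: "(1/\<tau>) * (snd (F' d) $ i - snd d $ i) = M z (G' d) (axis i 1, 0) \<and>
             (1/2) * (snd (F' d) $ i + snd d $ i) = M z (G' d) (0, axis i 1)" for d i
    proof -
      have sF: "((\<lambda>y. snd (F y) $ i) has_derivative (\<lambda>d. snd (F' d) $ i)) (at x)"
        using bounded_linear.has_derivative[OF nth has_derivative_snd[OF FD]] .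
      have sI: "((\<lambda>y. snd y $ i) has_derivative (\<lambda>d. snd d $ i)) (at x)"
        using bounded_linear.has_derivative[OF nth has_derivative_snd[OF has_derivative_ident]] .
      have c1: "((\<lambda>y. L' (G y) e) has_derivative (\<lambda>d. M z (G' d) e)) (at x)" for e
        using has_derivative_compose[OF GD Md[where z="G x" and e=e]] unfolding z_def by (simp add: o_def)
      have l1: "((\<lambda>y. (1/\<tau>) * (snd (F y) $ i - snd y $ i)) has_derivative (\<lambda>d. (1/\<tau>) * (snd (F' d) $ i - snd d $ i))) (at x)"
        by (intro derivative_intros sF sI)
      have l2: "((\<lambda>y. (1/2) * (snd (F y) $ i + snd y $ i)) has_derivative (\<lambda>d. (1/2) * (snd (F' d) $ i + snd d $ i))) (at x)"
        by (intro derivative_intros sF sI)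
      have r1: "((\<lambda>y. (1/\<tau>) * (snd (F y) $ i - snd y $ i)) has_derivative (\<lambda>d. M z (G' d) (axis i 1, 0))) (at x)"
        by (rule has_derivative_transform_within_open[OF c1 W_open xW]) (use Sch in auto)
      have r2: "((\<lambda>y. (1/2) * (snd (F y) $ i + snd y $ i)) has_derivative (\<lambda>d. M z (G' d) (0, axis i 1))) (at x)"
        by (rule has_derivative_transform_within_open[OF c1 W_open xW]) (use Sch in auto)
      show ?thesis using has_derivative_unique[OF l1 r1] has_derivative_unique[OF l2 r2] by meson
    qed
    have key: "(\<Sum>i\<in>UNIV. M z (G' d) (axis i 1, 0) * fst (G' e) $ i + M z (G' d) (0, axis i 1) * snd (G' e) $ i)
             = M z (G' d) (G' e)" for d e
    proof -
      have "(\<Sum>i\<in>UNIV. fst (G' e) $ i *\<^sub>R (axis i 1, 0) + snd (G' e) $ i *\<^sub>R (0, axis i 1)) = G' e"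
        by (simp add: prod_eq_iff fst_sum snd_sum basis_expansion scalar_mult_eq_scaleR[symmetric])
      hence "M z (G' d) (G' e) = M z (G' d) (\<Sum>i\<in>UNIV. fst (G' e) $ i *\<^sub>R (axis i 1, 0) + snd (G' e) $ i *\<^sub>R (0, axis i 1))"
        by simp
      also have "\<dots> = (\<Sum>i\<in>UNIV. fst (G' e) $ i * M z (G' d) (axis i 1, 0) + snd (G' e) $ i * M z (G' d) (0, axis i 1))"
      proof -
        have lz: "linear (M z (G' d))" by (rule Mlin)
        show ?thesis
          by (simp only: linear_sum[OF lz] o_def linear_add[OF lz] linear_scale[OF lz] real_scaleR_def)
      qed
      finally show ?thesis by (simp add: mult.commute)
    qed
    have tne: "\<tau> \<noteq> 0" using tau_pos by simp
    have per: "(snd (F' u) $ i * fst (F' w) $ i - snd (F' w) $ i * fst (F' u) $ i)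
             - (snd u $ i * fst w $ i - snd w $ i * fst u $ i)
           = \<tau> * ((M z (G' u) (axis i 1, 0) * fst (G' w) $ i + M z (G' u) (0, axis i 1) * snd (G' w) $ i)
                - (M z (G' w) (axis i 1, 0) * fst (G' u) $ i + M z (G' w) (0, axis i 1) * snd (G' u) $ i))" for i
    proof -
      have e1: "M z (G' u) (axis i 1, 0) = (1/\<tau>) * (snd (F' u) $ i - snd u $ i)"
        "M z (G' u) (0, axis i 1) = (1/2) * (snd (F' u) $ i + snd u $ i)"
        "M z (G' w) (axis i 1, 0) = (1/\<tau>) * (snd (F' w) $ i - snd w $ i)"
        "M z (G' w) (0, axis i 1) = (1/2) * (snd (F' w) $ i + snd w $ i)"
        using E by metis+
      show ?thesis unfolding e1 unfolding G'_def using tne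
        by (simp add: field_simps)
    qed
    have "omega (F' u) (F' w) - omega u w = \<tau> * (M z (G' u) (G' w) - M z (G' w) (G' u))"
      unfolding omega_def key[symmetric]
      by (simp add: sum_subtractf[symmetric] per sum_distrib_left)
    also have "\<dots> = 0" using Msym by simp
    finally show "omega (frechet_derivative F (at x) u) (frechet_derivative F (at x) w) = omega u w"
      unfolding F'_def by simp
  qed
qed

end
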